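(* Let $S=\{p_1,\dots,p_m\}$ be a finite set of possibly partial probability distributions, all with the same total mass $\textsc{Mass}(S)>0$. Let $\textsc{OPT}_S$ be a minimum-entropy coupling of $S$. Then $$H(\textsc{OPT}_S)\ \ge\ H(\textsc{Profile}_S)\triangleq\int_0^{\textsc{Mass}(S)}\log_2\!\left(\frac{1}{\textsc{Profile}_S(x)}\right)dx .$$
   Context: A possibly partial distribution $p$ is a finite vector of nonnegative reals $p(1)\ge p(2)\ge\dots\ge p(n)$ (always sorted in non-increasing order) with total mass $\textsc{Mass}(p)=\sum_j p(j)\le 1$. A coupling of $p_1,\dots,p_m$ is a nonnegative array $\mathcal C(i_1,\dots,i_m)$ such that for every $k$ and every state $i_k$, the sum of $\mathcal C$ over all tuples with $k$-th coordinate $i_k$ equals $p_k(i_k)$. Its entropy is $H(\mathcal C)=\sum \mathcal C(i)\log_2(1/\mathcal C(i))$ (with $0\log(1/0)=0$); $\textsc{OPT}_S$ is a coupling of minimum entropy. For a possibly partial distribution $p$, $\textsc{Sketch}_p:(0,\textsc{Mass}(p)]\to\mathbb R$ is defined by $\textsc{Sketch}_p(x)=p(i)$ for $x\in\big(\sum_{j>i}p(j),\sum_{j\ge i}p(j)\big]$. The profile is $\textsc{Profile}_S(x)=\min_{p\in S}\textsc{Sketch}_p(x)$ for $x\in(0,\textsc{Mass}(S)]$. *)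

theory Defs
  imports "HOL-Analysis.Analysis"
begin

definition partial_dist :: "real list \<Rightarrow> bool" where
  "partial_dist p \<longleftrightarrow> (\<forall>x\<in>set p. 0 \<le> x) \<and> sorted_wrt (\<ge>) p \<and> sum_list p \<le> 1"

definition mass :: "real list \<Rightarrow> real" where
  "mass p = sum_list p"

definition tuples :: "real list list \<Rightarrow> nat list set" where
  "tuples ps = {i. length i = length ps \<and> (\<forall>k<length ps. i ! k < length (ps ! k))}"

definition is_coupling :: "real list list \<Rightarrow> (nat list \<Rightarrow> real) \<Rightarrow> bool" where
  "is_coupling ps C \<longleftrightarrow>
     (\<forall>i\<in>tuples ps. 0 \<le> C i) \<and>
     (\<forall>k<length ps. \<forall>j<length (ps ! k).
        (\<Sum>i\<in>{i\<in>tuples ps. i ! k = j}. C i) = ps ! k ! j)"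

definition entropy :: "real list list \<Rightarrow> (nat list \<Rightarrow> real) \<Rightarrow> real" where
  "entropy ps C = (\<Sum>i\<in>tuples ps. if C i = 0 then 0 else C i * log 2 (1 / C i))"

definition min_entropy_coupling :: "real list list \<Rightarrow> (nat list \<Rightarrow> real) \<Rightarrow> bool" where
  "min_entropy_coupling ps C \<longleftrightarrow>
     is_coupling ps C \<and> (\<forall>C'. is_coupling ps C' \<longrightarrow> entropy ps C \<le> entropy ps C')"

definition sketch :: "real list \<Rightarrow> real \<Rightarrow> real" where
  "sketch p x = p ! (THE i. i < length p \<and> sum_list (drop (Suc i) p) < x \<and> x \<le> sum_list (drop i p))"

definition profile :: "real list list \<Rightarrow> real \<Rightarrow> real" where
  "profile ps x = Min ((\<lambda>p. sketch p x) ` set ps)"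

end

theory Submission
  imports Defs
begin

definition hh :: "real \<Rightarrow> real" where
  "hh y = (if y = 0 then 0 else y * log 2 (1 / y))"

lemma hh_alt: "hh y = y * log 2 (1 / y)"
  by (simp add: hh_def)

definition nonneg :: "real list \<Rightarrow> bool" where
  "nonneg p \<longleftrightarrow> (\<forall>x\<in>set p. 0 \<le> x)"

lemma sum_drop_Suc: "i < length p \<Longrightarrow> sum_list (drop i p) = p!i + sum_list (drop (Suc i) p)"
  by (simp add: Cons_nth_drop_Suc[symmetric])

lemma sum_drop_le: "(\<forall>x\<in>set xs. (0::real) \<le> x) \<Longrightarrow> sum_list (drop n xs) \<le> sum_list xs"
proof (induction xs arbitrary: n)
  case Nil then show ?case by simp
next
  case (Cons a xs) then show ?case
    by (cases n) (auto intro: add_increasing)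
qed

lemma sum_drop_mono: "nonneg p \<Longrightarrow> i \<le> j \<Longrightarrow> sum_list (drop j p) \<le> sum_list (drop i p)"
proof -
  assume n: "nonneg p" and ij: "i \<le> j"
  have "drop j p = drop (j - i) (drop i p)" using ij by simp
  moreover have "\<forall>x\<in>set (drop i p). 0 \<le> x" using n unfolding nonneg_def
    by (meson in_set_dropD)
  ultimately show ?thesis using sum_drop_le by metis
qed

lemma sketch_eq:
  assumes "nonneg p" "i < length p" "sum_list (drop (Suc i) p) < x" "x \<le> sum_list (drop i p)"
  shows "sketch p x = p!i"
proof -
  have "(THE i. i < length p \<and> sum_list (drop (Suc i) p) < x \<and> x \<le> sum_list (drop i p)) = i"
  proof (rule the_equality)
    show "i < length p \<and> sum_list (drop (Suc i) p) < x \<and> x \<le> sum_list (drop i p)" using assms by simp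
  next
    fix j assume j: "j < length p \<and> sum_list (drop (Suc j) p) < x \<and> x \<le> sum_list (drop j p)"
    show "j = i"
    proof (rule ccontr)
      assume "j \<noteq> i"
      then consider "j < i" | "i < j" by linarith
      then show False
      proof cases
        case 1
        then have "sum_list (drop i p) \<le> sum_list (drop (Suc j) p)" using sum_drop_mono assms(1) by simp
        then show False using j assms by linarith
      next
        case 2
        then have "sum_list (drop j p) \<le> sum_list (drop (Suc i) p)" using sum_drop_mono assms(1) by simp
        then show False using j assms by linarith
      qed
    qed
  qed
  then show ?thesis unfolding sketch_def by simp
qed

lemma sketch_ex:
  "nonneg p \<Longrightarrow> 0 < x \<Longrightarrow> x \<le> sum_list p \<Longrightarrow>
    \<exists>i<length p. sum_list (drop (Suc i) p) < x \<and> x \<le> sum_list (drop i p)"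
proof (induction p)
  case Nil then show ?case by simp
next
  case (Cons a p)
  show ?case
  proof (cases "x \<le> sum_list p")
    case True
    then obtain i where "i < length p" "sum_list (drop (Suc i) p) < x" "x \<le> sum_list (drop i p)"
      using Cons by (auto simp: nonneg_def)
    then show ?thesis by (intro exI[of _ "Suc i"]) auto
  next
    case False
    then show ?thesis using Cons.prems by (intro exI[of _ 0]) auto
  qed
qed

lemma sketch_integral:
  "nonneg c \<Longrightarrow> ((\<lambda>x. log 2 (1 / sketch c x)) has_integral (sum_list (map hh c))) {0..sum_list c}"
proof (induction c)
  case Nil then show ?case using has_integral_refl(2) by simp
next
  case (Cons a rest)
  define M' where "M' = sum_list rest"
  have nr: "nonneg rest" and a0: "0 \<le> a" using Cons.prems by (auto simp: nonneg_def)
  have M'0: "0 \<le> M'" unfolding M'_def using nr sum_list_nonneg nonneg_def by metis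
  have I1: "((\<lambda>x. log 2 (1 / sketch (a # rest) x)) has_integral (sum_list (map hh rest))) {0..M'}"
  proof (rule has_integral_spike_finite[of "{0}"])
    show "((\<lambda>x. log 2 (1 / sketch rest x)) has_integral (sum_list (map hh rest))) {0..M'}"
      using Cons.IH nr M'_def by simp
  next
    fix x assume x: "x \<in> {0..M'} - {0}"
    then obtain i where i: "i < length rest" "sum_list (drop (Suc i) rest) < x" "x \<le> sum_list (drop i rest)"
      using sketch_ex[OF nr, of x] M'_def by auto
    have "sketch rest x = rest ! i" using sketch_eq[OF nr i] .
    moreover have "sketch (a # rest) x = (a # rest) ! Suc i"
      using sketch_eq[OF Cons.prems, of "Suc i" x] i by simp
    ultimately show "log 2 (1 / sketch (a # rest) x) = log 2 (1 / sketch rest x)" by simp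
  qed simp
  have I2: "((\<lambda>x. log 2 (1 / sketch (a # rest) x)) has_integral hh a) {M'..M'+a}"
  proof (rule has_integral_spike_finite[of "{M'}"])
    show "((\<lambda>x. log 2 (1 / a)) has_integral hh a) {M'..M'+a}"
      using has_integral_const_real[of "log 2 (1/a)" M' "M'+a"] a0 by (simp add: hh_alt)
  next
    fix x assume x: "x \<in> {M'..M'+a} - {M'}"
    have "sketch (a # rest) x = (a # rest) ! 0"
      using sketch_eq[OF Cons.prems, of 0 x] x M'_def by simp
    then show "log 2 (1 / sketch (a # rest) x) = log 2 (1 / a)" by simp
  qed simp
  show ?case using has_integral_combine[OF M'0 _ I1 I2] a0 M'_def by (simp add: add.commute)
qed


definition Lf :: "real \<Rightarrow> real \<Rightarrow> real" where
  "Lf v y = (if y < v then y else 0)"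

lemma B1:
  assumes n: "nonneg p" and s: "sorted_wrt (\<ge>) p" and i: "i < length p"
    and x: "x \<le> sum_list (drop i p)" and v: "p!i < v"
  shows "x \<le> sum_list (map (Lf v) p)"
proof -
  have "\<forall>y\<in>set (drop i p). y < v"
  proof
    fix y assume "y \<in> set (drop i p)"
    then obtain j where j: "j < length (drop i p)" "y = drop i p ! j" by (auto simp: in_set_conv_nth)
    then have y: "y = p ! (i + j)" "i + j < length p" by auto
    have "p ! (i+j) \<le> p ! i"
    proof (cases "j = 0")
      case False
      then show ?thesis using sorted_wrt_nth_less[OF s, of i "i+j"] y by simp
    qed simp
    then show "y < v" using y v by simp
  qed
  then have "map (Lf v) (drop i p) = drop i p" by (intro map_idI) (auto simp: Lf_def)
  then have e: "sum_list (drop i p) = sum_list (drop i (map (Lf v) p))" by (simp add: drop_map)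
  have "\<forall>y\<in>set (map (Lf v) p). 0 \<le> y" using n by (auto simp: nonneg_def Lf_def)
  then show ?thesis using e x sum_drop_le by (metis order_trans)
qed

lemma B2:
  assumes n: "nonneg p" and s: "sorted_wrt (\<ge>) p" and i: "i < length p"
    and x: "sum_list (drop (Suc i) p) < x" and v: "v \<le> p!i"
  shows "sum_list (map (Lf v) p) < x"
proof -
  have t: "\<forall>y\<in>set (take (Suc i) p). Lf v y = 0"
  proof
    fix y assume "y \<in> set (take (Suc i) p)"
    then obtain j where j: "j < length (take (Suc i) p)" "y = take (Suc i) p ! j" by (auto simp: in_set_conv_nth)
    then have y: "y = p ! j" "j \<le> i" by auto
    have "p ! i \<le> p ! j"
    proof (cases "j = i")
      case False
      then show ?thesis using sorted_wrt_nth_less[OF s, of j i] y i by simp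
    qed (simp add: y)
    then show "Lf v y = 0" using y v by (simp add: Lf_def)
  qed
  have "sum_list (map (Lf v) p) = sum_list (map (Lf v) (take (Suc i) p)) + sum_list (map (Lf v) (drop (Suc i) p))"
    by (metis append_take_drop_id map_append sum_list_append)
  also have "sum_list (map (Lf v) (take (Suc i) p)) = 0"
  proof -
    have "map (Lf v) (take (Suc i) p) = map (\<lambda>_. 0) (take (Suc i) p)" using t by simp
    then show ?thesis by (simp add: sum_list_replicate map_replicate_const)
  qed
  also have "sum_list (map (Lf v) (drop (Suc i) p)) \<le> sum_list (map (\<lambda>y. y) (drop (Suc i) p))"
    using n by (intro sum_list_mono) (auto simp: Lf_def nonneg_def dest: in_set_dropD)
  finally show ?thesis using x by simp
qed


lemma tuples_finite: "finite (tuples ps)"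
proof -
  define B where "B = sum_list (map length ps)"
  have "tuples ps \<subseteq> {xs. set xs \<subseteq> {..<B} \<and> length xs = length ps}"
  proof
    fix t assume t: "t \<in> tuples ps"
    have "set t \<subseteq> {..<B}"
    proof
      fix y assume "y \<in> set t"
      then obtain k where k: "k < length t" "y = t ! k" by (auto simp: in_set_conv_nth)
      then have "k < length ps" "y < length (ps ! k)" using t by (auto simp: tuples_def)
      moreover have "length (ps ! k) \<le> B" unfolding B_def
        using \<open>k < length ps\<close> by (intro member_le_sum_list) auto
      ultimately show "y \<in> {..<B}" by simp
    qed
    then show "t \<in> {xs. set xs \<subseteq> {..<B} \<and> length xs = length ps}" using t by (auto simp: tuples_def)
  qed
  then show ?thesis using finite_lists_length_eq[of "{..<B}" "length ps"] finite_subset by blast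
qed

lemma coup_le:
  assumes c: "is_coupling ps C" and k: "k < length ps" and t: "t \<in> tuples ps"
  shows "C t \<le> ps!k!(t!k)"
proof -
  have "t!k < length (ps!k)" using t k by (auto simp: tuples_def)
  then have "ps!k!(t!k) = (\<Sum>i\<in>{i\<in>tuples ps. i ! k = t!k}. C i)" using c k by (simp add: is_coupling_def)
  moreover have "C t \<le> (\<Sum>i\<in>{i\<in>tuples ps. i ! k = t!k}. C i)"
    using c t tuples_finite[of ps] by (intro member_le_sum) (auto simp: is_coupling_def)
  ultimately show ?thesis by simp
qed

lemma L_le:
  assumes c: "is_coupling ps C" and k: "k < length ps"
  shows "sum_list (map (Lf v) (ps!k)) \<le> (\<Sum>t\<in>tuples ps. Lf v (C t))"
proof -
  define p where "p = ps!k"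
  define T where "T = tuples ps"
  define F where "F t = (if p!(t!k) < v then C t else 0)" for t
  have fT: "finite T" using tuples_finite T_def by simp
  have "sum_list (map (Lf v) p) = (\<Sum>j = 0..<length p. Lf v (p!j))"
    by (simp add: sum_list_sum_nth)
  also have "\<dots> = (\<Sum>j\<in>{0..<length p}. \<Sum>t\<in>{t\<in>T. t!k = j}. F t)"
  proof (rule sum.cong)
    fix j assume "j \<in> {0..<length p}"
    then have e: "p!j = (\<Sum>t\<in>{t\<in>T. t!k = j}. C t)" using c k by (simp add: is_coupling_def p_def T_def)
    show "Lf v (p!j) = (\<Sum>t\<in>{t\<in>T. t!k = j}. F t)"
    proof (cases "p!j < v")
      case True
      have "(\<Sum>t\<in>{t\<in>T. t!k = j}. F t) = (\<Sum>t\<in>{t\<in>T. t!k = j}. C t)"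
        using True by (intro sum.cong) (auto simp: F_def)
      then show ?thesis using True e by (simp add: Lf_def)
    next
      case False
      have "(\<Sum>t\<in>{t\<in>T. t!k = j}. F t) = 0"
        using False by (intro sum.neutral) (auto simp: F_def)
      then show ?thesis using False by (simp add: Lf_def)
    qed
  qed simp
  also have "\<dots> = (\<Sum>t\<in>T. F t)"
    by (rule sum.group) (use fT k in \<open>auto simp: T_def tuples_def p_def\<close>)
  also have "\<dots> \<le> (\<Sum>t\<in>T. Lf v (C t))"
  proof (rule sum_mono)
    fix t assume t: "t \<in> T"
    have "C t \<le> p!(t!k)" using coup_le[OF c k] t by (simp add: T_def p_def)
    moreover have "0 \<le> C t" using c t by (simp add: is_coupling_def T_def)
    ultimately show "F t \<le> Lf v (C t)" by (auto simp: F_def Lf_def)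
  qed
  finally show ?thesis by (simp add: p_def T_def)
qed


lemma perm_sum: "mset xs = mset ys \<Longrightarrow> sum_list (map (f::'a \<Rightarrow> real) xs) = sum_list (map f ys)"
proof -
  assume "mset xs = mset ys"
  then have "mset (map f xs) = mset (map f ys)" by simp
  then have "sum_mset (mset (map f xs)) = sum_mset (mset (map f ys))" by simp
  then show ?thesis by (simp only: sum_mset_sum_list)
qed

lemma hh_nonneg: "0 \<le> y \<Longrightarrow> y \<le> 1 \<Longrightarrow> 0 \<le> hh y"
proof (cases "y = 0")
  case False
  assume "0 \<le> y" "y \<le> 1"
  then have "0 < y" "1 \<le> 1 / y" using False by auto
  then show ?thesis unfolding hh_def by simp
qed (simp add: hh_def)

theorem theorem1:
  fixes ps :: "real list list" and M :: real and OPT :: "nat list \<Rightarrow> real"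
  assumes "ps \<noteq> []"
    and "\<forall>p\<in>set ps. partial_dist p"
    and "\<forall>p\<in>set ps. mass p = M"
    and "M > 0"
    and "min_entropy_coupling ps OPT"
  shows "entropy ps OPT \<ge> integral {0..M} (\<lambda>x. log 2 (1 / profile ps x))"
proof -
  define T where "T = tuples ps"
  have fT: "finite T" using tuples_finite T_def by simp
  have cp: "is_coupling ps OPT" using assms(5) by (simp add: min_entropy_coupling_def)
  have OPT0: "\<And>t. t \<in> T \<Longrightarrow> 0 \<le> OPT t" using cp by (simp add: is_coupling_def T_def)
  obtain xs where xs: "distinct xs" "set xs = T" using finite_distinct_list[OF fT] by blast
  define c where "c = rev (sort (map OPT xs))"
  have msc: "mset c = mset (map OPT xs)" by (simp add: c_def)
  have sums: "\<And>f::real\<Rightarrow>real. sum_list (map f c) = (\<Sum>t\<in>T. f (OPT t))"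
  proof -
    fix f :: "real \<Rightarrow> real"
    have "sum_list (map f c) = sum_list (map f (map OPT xs))" by (rule perm_sum[OF msc])
    also have "\<dots> = (\<Sum>t\<in>T. f (OPT t))" using xs by (simp add: sum_list_distinct_conv_sum_set)
    finally show "sum_list (map f c) = (\<Sum>t\<in>T. f (OPT t))" .
  qed
  have setc: "set c = OPT ` T" using xs by (simp add: c_def)
  have nc: "nonneg c" using OPT0 setc by (auto simp: nonneg_def)
  have sc: "sorted_wrt (\<ge>) c" by (simp add: c_def sorted_wrt_rev)
  have p0: "ps!0 \<in> set ps" using assms(1) by simp
  have sum_p0: "sum_list (ps!0) = M" using assms(3) p0 by (simp add: mass_def)
  have sumT: "(\<Sum>t\<in>T. OPT t) = M"
  proof -
    have "(\<Sum>t\<in>T. OPT t) = (\<Sum>j\<in>{0..<length (ps!0)}. \<Sum>t\<in>{t\<in>T. t!0 = j}. OPT t)"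
      by (rule sum.group[symmetric]) (use fT assms(1) in \<open>auto simp: T_def tuples_def\<close>)
    also have "\<dots> = (\<Sum>j\<in>{0..<length (ps!0)}. ps!0!j)"
      using cp assms(1) by (intro sum.cong) (auto simp: is_coupling_def T_def)
    also have "\<dots> = M" using sum_p0 by (simp add: sum_list_sum_nth)
    finally show ?thesis .
  qed
  have sumc: "sum_list c = M" using sums[of "\<lambda>y. y"] sumT by simp
  have H: "entropy ps OPT = sum_list (map hh c)"
    using sums[of hh] by (simp add: entropy_def hh_def T_def)
  define \<psi> where "\<psi> = (\<lambda>x. log 2 (1 / sketch c x))"
  define \<phi> where "\<phi> = (\<lambda>x. log 2 (1 / profile ps x))"
  have I\<psi>: "(\<psi> has_integral entropy ps OPT) {0..M}"
    using sketch_integral[OF nc] sumc H by (simp add: \<psi>_def)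
  have key: "\<phi> x \<le> \<psi> x" if x: "0 < x" "x \<le> M" for x
  proof -
    obtain j where j: "j < length c" "sum_list (drop (Suc j) c) < x" "x \<le> sum_list (drop j c)"
      using sketch_ex[OF nc x(1)] x sumc by auto
    have skc: "sketch c x = c!j" using sketch_eq[OF nc j] .
    have cpos: "0 < c!j" using j sum_drop_Suc[OF j(1)] by linarith
    have le: "sketch c x \<le> sketch p x" if p: "p \<in> set ps" for p
    proof -
      obtain k where k: "k < length ps" "p = ps!k" using p by (auto simp: in_set_conv_nth)
      have pd: "partial_dist p" using assms(2) p by simp
      have np: "nonneg p" and sp: "sorted_wrt (\<ge>) p" using pd by (auto simp: partial_dist_def nonneg_def)
      have sp_M: "sum_list p = M" using assms(3) p by (simp add: mass_def)
      obtain i where i: "i < length p" "sum_list (drop (Suc i) p) < x" "x \<le> sum_list (drop i p)"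
        using sketch_ex[OF np x(1)] x sp_M by auto
      have skp: "sketch p x = p!i" using sketch_eq[OF np i] .
      show ?thesis
      proof (rule ccontr)
        assume "\<not> sketch c x \<le> sketch p x"
        then have lt: "p!i < c!j" using skc skp by simp
        have "x \<le> sum_list (map (Lf (c!j)) p)" using B1[OF np sp i(1) i(3) lt] .
        also have "\<dots> \<le> (\<Sum>t\<in>T. Lf (c!j) (OPT t))" using L_le[OF cp k(1)] k T_def by simp
        also have "\<dots> = sum_list (map (Lf (c!j)) c)" using sums by simp
        also have "\<dots> < x" using B2[OF nc sc j(1) j(2)] by simp
        finally show False by simp
      qed
    qed
    have "sketch c x \<le> profile ps x"
      unfolding profile_def using assms(1) le by (subst Min_ge_iff) auto
    then have "1 / profile ps x \<le> 1 / sketch c x" using skc cpos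
      by (intro divide_left_mono) auto
    moreover have "0 < 1 / profile ps x" using \<open>sketch c x \<le> profile ps x\<close> skc cpos by simp
    moreover have "0 < 1 / sketch c x" using skc cpos by simp
    ultimately show ?thesis unfolding \<phi>_def \<psi>_def
      using log_le_cancel_iff[of 2 "1/profile ps x" "1/sketch c x"] by linarith
  qed
  show ?thesis
  proof (cases "\<phi> integrable_on {0..M}")
    case True
    define \<psi>' where "\<psi>' x = (if x = 0 then \<phi> x else \<psi> x)" for x
    have I': "(\<psi>' has_integral entropy ps OPT) {0..M}"
      by (rule has_integral_spike_finite[of "{0}" _ _ \<psi>]) (use I\<psi> in \<open>auto simp: \<psi>'_def\<close>)
    have "integral {0..M} \<phi> \<le> integral {0..M} \<psi>'"
      using True I' key by (intro integral_le) (auto simp: \<psi>'_def)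
    then show ?thesis using integral_unique[OF I'] by (simp add: \<phi>_def)
  next
    case False
    have "0 \<le> entropy ps OPT"
    proof -
      have M1: "M \<le> 1" using assms(2,3) p0 by (auto simp: partial_dist_def mass_def)
      have "\<And>t. t \<in> T \<Longrightarrow> OPT t \<le> M"
      proof -
        fix t assume "t \<in> T"
        then have "OPT t \<le> (\<Sum>t\<in>T. OPT t)" using OPT0 fT by (intro member_le_sum) auto
        then show "OPT t \<le> M" using sumT by simp
      qed
      then have "0 \<le> (\<Sum>t\<in>T. hh (OPT t))" using OPT0 M1 by (intro sum_nonneg hh_nonneg) (auto intro: order_trans)
      then show ?thesis using H sums by simp
    qed
    moreover have "integral {0..M} \<phi> = 0" using False by (rule not_integrable_integral)
    ultimately show ?thesis by (simp add: \<phi>_def)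
  qed
qed

end
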